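(* Let $n$, $k$, $t$, $s$ be positive integers with $k\geq t+1$ and $n\geq 2k$, and let $V$ be an $n$-dimensional vector space over $\mathbb{F}_q$. Suppose $\mathcal{F}\subseteq{V\brack k}$ is almost $t$-intersecting and $S\in{V\brack s}$. If there exists $F\in\mathcal{F}$ with $\dim(F\cap S)=m<t$, then there is $R\in{V\brack s+t-m}$ with $S\subseteq R$ such that $$|\mathcal{F}_S|\leq{k-t+1\brack 1}^{t-m}|\mathcal{F}_R|+1.$$
   Context: $q$ is a prime power; ${W\brack k}$ is the set of $k$-dimensional subspaces of $W$ and ${m\brack r}$ the Gaussian binomial coefficient $\prod_{i=0}^{r-1}\frac{q^{m-i}-1}{q^{r-i}-1}$. A family $\mathcal{F}\subseteq{V\brack k}$ is almost $t$-intersecting if for each $F\in\mathcal{F}$ there is at most one $F'\in\mathcal{F}$ with $\dim(F\cap F')<t$. For a subspace $A$ of $V$, $\mathcal{F}_A=\{F\in\mathcal{F}: A\subseteq F\}$. *)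

theory Defs
  imports "HOL-Analysis.Analysis"
begin

text \<open>The ambient space V is the n-dimensional space 'a^'n over the finite field 'a
 (so q = CARD('a), n = CARD('n)).\<close>

definition subspaces_dim :: "nat \<Rightarrow> ('a::field ^ 'n) set set" where
  "subspaces_dim k = {W. vec.subspace W \<and> vec.dim W = k}"

definition gauss_binom :: "nat \<Rightarrow> nat \<Rightarrow> nat \<Rightarrow> real" where
  "gauss_binom q m r = (\<Prod>i<r. (real q ^ (m - i) - 1) / (real q ^ (r - i) - 1))"

definition almost_t_intersecting :: "nat \<Rightarrow> ('a::field ^ 'n) set set \<Rightarrow> bool" where
  "almost_t_intersecting t \<F> \<longleftrightarrow>
     (\<forall>F\<in>\<F>. card {F'\<in>\<F>. vec.dim (F \<inter> F') < t} \<le> 1)"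

definition fam_containing :: "('a ^ 'n) set set \<Rightarrow> ('a ^ 'n) set \<Rightarrow> ('a ^ 'n) set set" where
  "fam_containing \<F> A = {F\<in>\<F>. A \<subseteq> F}"

end

theory Submission
  imports Defs
begin

lemma int_dim:
  fixes A B F :: "('a::field ^ 'n) set"
  assumes "vec.subspace A" "vec.subspace B" "vec.subspace F" "A \<subseteq> F" "B \<subseteq> F"
  shows "vec.dim A + vec.dim B \<le> vec.dim F + vec.dim (A \<inter> B)"
proof -
  have "{x + y |x y. x \<in> A \<and> y \<in> B} \<subseteq> F"
    using assms by (auto intro: vec.subspace_add)
  hence "vec.dim {x + y |x y. x \<in> A \<and> y \<in> B} \<le> vec.dim F" by (rule vec.dim_subset)
  thus ?thesis using vec.dim_sums_Int[OF assms(1,2)] by linarith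
qed

lemma card_span_le:
  fixes B :: "('a::{field,finite} ^ 'n) set"
  assumes "finite B"
  shows "card (vec.span B) \<le> CARD('a) ^ card B"
proof -
  have "vec.span B \<subseteq> (\<lambda>u. \<Sum>v\<in>B. u v *s v) ` (PiE B (\<lambda>_. UNIV))"
  proof
    fix x assume "x \<in> vec.span B"
    then obtain u where x: "x = (\<Sum>v\<in>B. u v *s v)" using vec.span_finite[OF assms] by auto
    have "x = (\<Sum>v\<in>B. restrict u B v *s v)" unfolding x by (rule sum.cong) auto
    moreover have "restrict u B \<in> PiE B (\<lambda>_. UNIV)" by auto
    ultimately show "x \<in> (\<lambda>u. \<Sum>v\<in>B. u v *s v) ` (PiE B (\<lambda>_. UNIV))" by blast
  qed
  hence "card (vec.span B) \<le> card ((\<lambda>u. \<Sum>v\<in>B. u v *s v) ` (PiE B (\<lambda>_. UNIV :: 'a set)))"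
    by (intro card_mono finite_imageI finite_PiE assms) auto
  also have "\<dots> \<le> card (PiE B (\<lambda>_. UNIV :: 'a set))" by (rule card_image_le) (auto intro: finite_PiE assms)
  also have "\<dots> = CARD('a) ^ card B" using assms by (simp add: card_PiE)
  finally show ?thesis .
qed

lemma complement_exists:
  fixes F S :: "('a::{field,finite} ^ 'n) set"
  assumes "vec.subspace F" "vec.subspace S" "r + vec.dim (F \<inter> S) \<le> vec.dim F"
  shows "\<exists>Y. vec.subspace Y \<and> Y \<subseteq> F \<and> Y \<inter> S \<subseteq> {0} \<and> vec.dim Y = r \<and> card Y \<le> CARD('a) ^ r"
proof -
  obtain Bi where Bi: "Bi \<subseteq> F \<inter> S" "vec.independent Bi" "F \<inter> S \<subseteq> vec.span Bi" "card Bi = vec.dim (F \<inter> S)"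
    using vec.basis_exists by blast
  obtain B where B: "Bi \<subseteq> B" "B \<subseteq> F" "vec.independent B" "F \<subseteq> vec.span B"
    using vec.maximal_independent_subset_extend[of Bi F] Bi by auto
  have finB: "finite B" using B(3) vec.finiteI_independent by blast
  have spB: "vec.span B = F" using B assms(1) vec.span_minimal[of B F] by auto
  have "vec.span B = vec.span F" using spB assms(1) vec.span_eq_iff by metis
  hence cB: "card B = vec.dim F" using vec.dim_eq_card[of B F] B(3) by simp
  have "card (B - Bi) = card B - card Bi" using finB B(1) by (meson card_Diff_subset infinite_super)
  hence "r \<le> card (B - Bi)" using cB Bi(4) assms(3) by linarith
  then obtain B' where B': "B' \<subseteq> B - Bi" "card B' = r"
    using obtain_subset_with_card_n by metis
  define Y where "Y = vec.span B'"
  have finB': "finite B'" using B' finB by (meson finite_Diff rev_finite_subset)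
  have indB': "vec.independent B'" using B' B(3) vec.independent_mono by blast
  have YF: "Y \<subseteq> F" unfolding Y_def using B' B(2) assms(1) by (intro vec.span_minimal) auto
  have dY: "vec.dim Y = r" unfolding Y_def using vec.dim_span_eq_card_independent[OF indB'] B' by simp
  have cY: "card Y \<le> CARD('a) ^ r" unfolding Y_def using card_span_le[OF finB'] B' by simp
  have Z: "vec.span Bi = F \<inter> S"
    using Bi assms vec.span_minimal[of Bi "F \<inter> S"] vec.subspace_inter by blast
  have "B' \<union> Bi \<subseteq> B" using B' B by auto
  hence indU: "vec.independent (B' \<union> Bi)" using vec.independent_mono[OF B(3)] by blast
  have disj: "B' \<inter> Bi = {}" using B' by auto
  have finBi: "finite Bi" using Bi(2) vec.finiteI_independent by blast
  have "vec.dim (vec.span (B' \<union> Bi)) = r + vec.dim (F \<inter> S)"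
    using vec.dim_span_eq_card_independent[OF indU] card_Un_disjoint[OF finB' finBi disj] B' Bi(4) by simp
  moreover have "vec.span (B' \<union> Bi) = {x + y |x y. x \<in> Y \<and> y \<in> vec.span Bi}"
    unfolding Y_def by (rule vec.span_Un)
  ultimately have e1: "vec.dim {x + y |x y. x \<in> Y \<and> y \<in> vec.span Bi} = r + vec.dim (F \<inter> S)" by simp
  have e2: "vec.dim (vec.span Bi) = vec.dim (F \<inter> S)"
    using vec.dim_span_eq_card_independent[OF Bi(2)] Bi(4) by simp
  have "vec.dim {x + y |x y. x \<in> Y \<and> y \<in> vec.span Bi} + vec.dim (Y \<inter> vec.span Bi) = vec.dim Y + vec.dim (vec.span Bi)"
    unfolding Y_def by (rule vec.dim_sums_Int) auto
  hence "vec.dim (Y \<inter> vec.span Bi) = 0" using e1 e2 dY by linarith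
  hence "Y \<inter> (F \<inter> S) \<subseteq> {0}" using Z by simp
  hence "Y \<inter> S \<subseteq> {0}" using YF by auto
  thus ?thesis using YF dY cY Y_def by auto
qed

lemma span_insert_inter:
  fixes F S :: "('a::field ^ 'n) set"
  assumes "vec.subspace F" "vec.subspace S" "w \<in> F"
  shows "F \<inter> vec.span (insert w S) = vec.span (insert w (F \<inter> S))"
proof
  show "F \<inter> vec.span (insert w S) \<subseteq> vec.span (insert w (F \<inter> S))"
  proof
    fix x assume x: "x \<in> F \<inter> vec.span (insert w S)"
    then obtain c where c: "x - c *s w \<in> vec.span S" using vec.span_insert by blast
    have "x - c *s w \<in> F" using x assms by (auto intro: vec.subspace_diff vec.subspace_scale)
    hence "x - c *s w \<in> vec.span (F \<inter> S)" using c assms vec.span_eq_iff vec.span_base by (metis IntI)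
    thus "x \<in> vec.span (insert w (F \<inter> S))" using vec.span_insert by blast
  qed
next
  have "vec.span (insert w (F \<inter> S)) \<subseteq> F"
    using assms by (intro vec.span_minimal) auto
  moreover have "vec.span (insert w (F \<inter> S)) \<subseteq> vec.span (insert w S)"
    by (intro vec.span_mono) auto
  ultimately show "vec.span (insert w (F \<inter> S)) \<subseteq> F \<inter> vec.span (insert w S)" by auto
qed

lemma double_count:
  fixes X :: "'b set" and W :: "'c set" and P :: "'c \<Rightarrow> 'b \<Rightarrow> bool"
  assumes "finite X" "finite W" "\<And>G. G \<in> X \<Longrightarrow> c \<le> card {w\<in>W. P w G}"
  shows "c * card X \<le> (\<Sum>w\<in>W. card {G\<in>X. P w G})"
proof -
  have "(\<Sum>w\<in>W. card {G\<in>X. P w G}) = (\<Sum>w\<in>W. \<Sum>G\<in>X. if P w G then 1 else 0)"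
    using assms by (simp add: sum.If_cases Int_def)
  also have "\<dots> = (\<Sum>G\<in>X. \<Sum>w\<in>W. if P w G then 1 else 0)" by (rule sum.swap)
  also have "\<dots> = (\<Sum>G\<in>X. card {w\<in>W. P w G})"
    using assms by (simp add: sum.If_cases Int_def)
  also have "\<dots> \<ge> (\<Sum>G\<in>X. c)" using assms(3) by (intro sum_mono) auto
  finally show ?thesis by (simp add: mult.commute)
qed

lemma card_field_ge2: "2 \<le> CARD('a::{field,finite})"
proof -
  have "card {0::'a, 1} \<le> CARD('a)" by (rule card_mono) auto
  thus ?thesis by simp
qed

lemma claim:
  fixes \<G> :: "('a::{field,finite} ^ 'n) set set" and F :: "('a ^ 'n) set"
  assumes F: "vec.subspace F" "vec.dim F = k" and tk: "t \<le> k" "0 < t"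
    and G: "\<And>G. G \<in> \<G> \<Longrightarrow> vec.subspace G \<and> t \<le> vec.dim (G \<inter> F)"
  shows "vec.subspace S' \<Longrightarrow> j \<le> t \<Longrightarrow> vec.dim (F \<inter> S') = t - j \<Longrightarrow>
    \<exists>R. vec.subspace R \<and> vec.dim R = vec.dim S' + j \<and> S' \<subseteq> R \<and>
      real (card {G\<in>\<G>. S' \<subseteq> G}) \<le> ((real CARD('a) ^ (k - t + 1) - 1) / (real CARD('a) - 1)) ^ j * real (card {G\<in>\<G>. R \<subseteq> G})"
proof (induction j arbitrary: S')
  case 0
  then show ?case by auto
next
  case (Suc j)
  define q where "q = CARD('a)"
  define r where "r = k - t + 1"
  define Bc where "Bc = (real q ^ r - 1) / (real q - 1)"
  have q2: "2 \<le> q" unfolding q_def by (rule card_field_ge2)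
  have "r + vec.dim (F \<inter> S') \<le> vec.dim F" using Suc.prems F tk unfolding r_def by simp
  then obtain Y where Y: "vec.subspace Y" "Y \<subseteq> F" "Y \<inter> S' \<subseteq> {0}" "vec.dim Y = r" "card Y \<le> q ^ r"
    using complement_exists[OF F(1) Suc.prems(1)] unfolding q_def by blast
  define Y0 where "Y0 = Y - {0}"
  define T where "T w = vec.span (insert w S')" for w
  have Y0F: "w \<in> F" "w \<notin> S'" if "w \<in> Y0" for w using that Y unfolding Y0_def by auto
  have TS: "S' \<subseteq> T w" for w unfolding T_def using vec.span_superset by blast
  have Tprops: "vec.subspace (T w) \<and> j \<le> t \<and> vec.dim (F \<inter> T w) = t - j" if w: "w \<in> Y0" for w
  proof -
    have "F \<inter> T w = vec.span (insert w (F \<inter> S'))"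
      unfolding T_def by (rule span_insert_inter[OF F(1) Suc.prems(1) Y0F(1)[OF w]])
    moreover have "w \<notin> vec.span (F \<inter> S')"
      using Y0F[OF w] vec.span_eq_iff vec.subspace_inter[OF F(1) Suc.prems(1)] by (metis IntE)
    moreover have "vec.dim (insert w (F \<inter> S')) = vec.dim (F \<inter> S') + 1"
      using vec.dim_insert[of w "F \<inter> S'"] \<open>w \<notin> vec.span (F \<inter> S')\<close> by presburger
    ultimately have "vec.dim (F \<inter> T w) = vec.dim (F \<inter> S') + 1"
      by (metis vec.dim_span)
    thus ?thesis using Suc.prems unfolding T_def by auto
  qed
  have dT: "vec.dim (T w) = vec.dim S' + 1" if w: "w \<in> Y0" for w
    using Y0F[OF w] Suc.prems(1) vec.span_eq_iff vec.dim_insert unfolding T_def by (metis vec.dim_span)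
  have ex: "\<forall>w\<in>Y0. \<exists>R. vec.subspace R \<and> vec.dim R = vec.dim (T w) + j \<and> T w \<subseteq> R \<and>
      real (card {G\<in>\<G>. T w \<subseteq> G}) \<le> Bc ^ j * real (card {G\<in>\<G>. R \<subseteq> G})"
  proof
    fix w assume w: "w \<in> Y0"
    have tp: "vec.subspace (T w)" "j \<le> t" "vec.dim (F \<inter> T w) = t - j" using Tprops[OF w] by auto
    show "\<exists>R. vec.subspace R \<and> vec.dim R = vec.dim (T w) + j \<and> T w \<subseteq> R \<and>
      real (card {G\<in>\<G>. T w \<subseteq> G}) \<le> Bc ^ j * real (card {G\<in>\<G>. R \<subseteq> G})"
      using Suc.IH[OF tp] unfolding Bc_def q_def r_def .
  qed
  obtain Rf where Rf0: "\<forall>w\<in>Y0. vec.subspace (Rf w) \<and> vec.dim (Rf w) = vec.dim (T w) + j \<and> T w \<subseteq> Rf w \<and>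
      real (card {G\<in>\<G>. T w \<subseteq> G}) \<le> Bc ^ j * real (card {G\<in>\<G>. Rf w \<subseteq> G})"
    by (rule exE[OF bchoice[OF ex]])
  have Rf: "vec.subspace (Rf w) \<and> vec.dim (Rf w) = vec.dim (T w) + j \<and> T w \<subseteq> Rf w \<and>
      real (card {G\<in>\<G>. T w \<subseteq> G}) \<le> Bc ^ j * real (card {G\<in>\<G>. Rf w \<subseteq> G})" if "w \<in> Y0" for w
    using Rf0 that by blast
  have "\<not> Y \<subseteq> {0}" using Y(4) unfolding r_def by (metis vec.dim_eq_0 add_is_0 one_neq_zero)
  hence Y0ne: "Y0 \<noteq> {}" unfolding Y0_def by auto
  have finY0: "finite Y0" by simp
  define f where "f w = card {G\<in>\<G>. Rf w \<subseteq> G}" for w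
  obtain w0 where w0: "w0 \<in> Y0" "f w0 = Max (f ` Y0)" 
  proof -
    have "Max (f ` Y0) \<in> f ` Y0" using Max_in[of "f ` Y0"] finY0 Y0ne by blast
    thus ?thesis using that by (metis imageE)
  qed
  have fmax: "f w \<le> f w0" if "w \<in> Y0" for w using w0 that finY0 by simp
  define X where "X = {G\<in>\<G>. S' \<subseteq> G}"
  have dc: "(q - 1) * card X \<le> (\<Sum>w\<in>Y0. card {G\<in>X. T w \<subseteq> G})"
  proof (rule double_count)
    show "finite X" by simp
    show "finite Y0" by simp
    fix G assume GX: "G \<in> X"
    hence Gs: "vec.subspace G" "t \<le> vec.dim (G \<inter> F)" "S' \<subseteq> G" using G unfolding X_def by auto
    have "vec.dim (G \<inter> F) + vec.dim Y \<le> vec.dim F + vec.dim (G \<inter> F \<inter> Y)"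
      using Y Gs F by (intro int_dim) (auto intro: vec.subspace_inter)
    hence "vec.dim (G \<inter> F \<inter> Y) \<noteq> 0" using Gs F Y(4) tk unfolding r_def by linarith
    hence "\<not> (G \<inter> F \<inter> Y \<subseteq> {0})" by (subst vec.dim_eq_0[symmetric])
    then obtain v where v: "v \<in> G" "v \<in> Y" "v \<noteq> 0" by blast
    have sub: "(\<lambda>c. c *s v) ` (UNIV - {0}) \<subseteq> {w\<in>Y0. T w \<subseteq> G}"
    proof
      fix x assume "x \<in> (\<lambda>c. c *s v) ` (UNIV - {0})"
      then obtain c where c: "c \<noteq> 0" "x = c *s v" by auto
      have xG: "x \<in> G" using c v Gs vec.subspace_scale by blast
      have "x \<in> Y0" using c v Y(1) vec.subspace_scale unfolding Y0_def by auto
      moreover have "T x \<subseteq> G" unfolding T_def using xG Gs by (intro vec.span_minimal) auto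
      ultimately show "x \<in> {w\<in>Y0. T w \<subseteq> G}" by auto
    qed
    have inj: "inj_on (\<lambda>c. c *s v) (UNIV - {0})" using v(3) by (auto intro: inj_onI)
    have c1: "card ((\<lambda>c. c *s v) ` (UNIV - {0})) = card (UNIV - {0::'a})"
      by (rule card_image[OF inj])
    have c2: "card ((\<lambda>c. c *s v) ` (UNIV - {0::'a})) \<le> card {w\<in>Y0. T w \<subseteq> G}"
      by (rule card_mono[OF _ sub]) simp
    have "card (UNIV - {0::'a}) = q - 1" unfolding q_def by (simp add: card_Diff_singleton)
    thus "q - 1 \<le> card {w\<in>Y0. T w \<subseteq> G}" using c1 c2 by simp
  qed
  have eqX: "{G\<in>X. T w \<subseteq> G} = {G\<in>\<G>. T w \<subseteq> G}" for w using TS unfolding X_def by blast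
  have "real (q - 1) * real (card X) \<le> (\<Sum>w\<in>Y0. real (card {G\<in>\<G>. T w \<subseteq> G}))"
  proof -
    have "(q - 1) * card X \<le> (\<Sum>w\<in>Y0. card {G\<in>\<G>. T w \<subseteq> G})" using dc by (simp only: eqX)
    hence "real ((q - 1) * card X) \<le> real (\<Sum>w\<in>Y0. card {G\<in>\<G>. T w \<subseteq> G})" by (simp only: of_nat_le_iff)
    thus ?thesis by (simp only: of_nat_mult of_nat_sum)
  qed
  also have "\<dots> \<le> (\<Sum>w\<in>Y0. Bc ^ j * real (f w0))"
  proof (rule sum_mono)
    fix w assume w: "w \<in> Y0"
    have "Bc \<ge> 0" unfolding Bc_def using q2 by (simp add: one_le_power)
    hence "Bc ^ j * real (f w) \<le> Bc ^ j * real (f w0)" using fmax[OF w] by (simp add: mult_left_mono)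
    thus "real (card {G\<in>\<G>. T w \<subseteq> G}) \<le> Bc ^ j * real (f w0)" using Rf[OF w] unfolding f_def by linarith
  qed
  also have "\<dots> = real (card Y0) * (Bc ^ j * real (f w0))" by simp
  also have "\<dots> \<le> (real q ^ r - 1) * (Bc ^ j * real (f w0))"
  proof (rule mult_right_mono)
    have "0 \<in> Y" using Y(1) vec.subspace_0 by blast
    hence "card Y0 = card Y - 1" unfolding Y0_def by (simp add: card_Diff_singleton)
    moreover have "card Y0 > 0" using Y0ne finY0 by (simp add: card_gt_0_iff)
    ultimately have "real (card Y0) = real (card Y) - 1" by (simp add: of_nat_diff)
    also have "\<dots> \<le> real (q ^ r) - 1" using Y(5) by (simp only: of_nat_le_iff diff_right_mono)
    finally show "real (card Y0) \<le> real q ^ r - 1" by simp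
    have "Bc \<ge> 0" unfolding Bc_def using q2 by (simp add: one_le_power)
    thus "0 \<le> Bc ^ j * real (f w0)" by simp
  qed
  also have "\<dots> = real (q - 1) * (Bc ^ Suc j * real (f w0))"
    unfolding Bc_def using q2 by (simp add: of_nat_diff field_simps)
  finally have "real (card X) \<le> Bc ^ Suc j * real (f w0)"
    using q2 by (simp add: mult_le_cancel_left_pos)
  moreover have "vec.dim (Rf w0) = vec.dim S' + Suc j" using Rf[OF w0(1)] dT[OF w0(1)] by simp
  moreover have "S' \<subseteq> Rf w0" using Rf[OF w0(1)] TS by blast
  ultimately show ?case using Rf[OF w0(1)] unfolding X_def f_def Bc_def q_def r_def by blast
qed

theorem lemma3p2:
  fixes \<F> :: "('a::{field,finite} ^ 'n) set set" and S F :: "('a ^ 'n) set"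
    and k t s m :: nat
  assumes "0 < k" "0 < t" "0 < s" "k \<ge> t + 1" "CARD('n) \<ge> 2 * k"
    and "\<F> \<subseteq> subspaces_dim k"
    and "almost_t_intersecting t \<F>"
    and "S \<in> subspaces_dim s"
    and "F \<in> \<F>" and "vec.dim (F \<inter> S) = m" and "m < t"
  shows "\<exists>R \<in> subspaces_dim (s + t - m). S \<subseteq> R \<and>
           real (card (fam_containing \<F> S))
             \<le> gauss_binom CARD('a) (k - t + 1) 1 ^ (t - m) * real (card (fam_containing \<F> R)) + 1"
proof -
  define Bc where "Bc = (real CARD('a) ^ (k - t + 1) - 1) / (real CARD('a) - 1)"
  have gb: "gauss_binom CARD('a) (k - t + 1) 1 = Bc" unfolding gauss_binom_def Bc_def by simp
  have q2: "2 \<le> CARD('a)" by (rule card_field_ge2)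
  have "1 \<le> real CARD('a) ^ (k - t + 1)" using q2 by (intro one_le_power) simp
  hence Bc0: "Bc \<ge> 0" unfolding Bc_def using q2 by (intro divide_nonneg_nonneg) simp_all
  define \<G> where "\<G> = {G\<in>\<F>. t \<le> vec.dim (G \<inter> F)}"
  have Fs: "vec.subspace F" "vec.dim F = k" using assms(6,9) unfolding subspaces_dim_def by auto
  have Ss: "vec.subspace S" "vec.dim S = s" using assms(8) unfolding subspaces_dim_def by auto
  have Gp: "\<And>G. G \<in> \<G> \<Longrightarrow> vec.subspace G \<and> t \<le> vec.dim (G \<inter> F)"
    using assms(6) unfolding \<G>_def subspaces_dim_def by auto
  have "t - m \<le> t" "vec.dim (F \<inter> S) = t - (t - m)" using assms(10,11) by auto
  moreover have tk: "t \<le> k" using assms(4) by simp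
  ultimately have "\<exists>R. vec.subspace R \<and> vec.dim R = vec.dim S + (t - m) \<and> S \<subseteq> R \<and>
      real (card {G\<in>\<G>. S \<subseteq> G}) \<le> ((real CARD('a) ^ (k - t + 1) - 1) / (real CARD('a) - 1)) ^ (t - m) * real (card {G\<in>\<G>. R \<subseteq> G})"
    using claim[OF Fs tk assms(2) Gp Ss(1)] by blast
  then
  obtain R where R: "vec.subspace R" "vec.dim R = vec.dim S + (t - m)" "S \<subseteq> R"
    "real (card {G\<in>\<G>. S \<subseteq> G}) \<le> Bc ^ (t - m) * real (card {G\<in>\<G>. R \<subseteq> G})"
    unfolding Bc_def by auto
  have Rin: "R \<in> subspaces_dim (s + t - m)" using R Ss assms(11) unfolding subspaces_dim_def by auto
  have "fam_containing \<F> S \<subseteq> {G\<in>\<G>. S \<subseteq> G} \<union> {F'\<in>\<F>. vec.dim (F \<inter> F') < t}"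
    unfolding fam_containing_def \<G>_def by (auto simp: Int_commute)
  hence "card (fam_containing \<F> S) \<le> card ({G\<in>\<G>. S \<subseteq> G} \<union> {F'\<in>\<F>. vec.dim (F \<inter> F') < t})"
    by (rule card_mono[rotated]) simp
  also have "\<dots> \<le> card {G\<in>\<G>. S \<subseteq> G} + card {F'\<in>\<F>. vec.dim (F \<inter> F') < t}" by (rule card_Un_le)
  also have "\<dots> \<le> card {G\<in>\<G>. S \<subseteq> G} + 1"
    using assms(7,9) unfolding almost_t_intersecting_def by auto
  finally have c1: "real (card (fam_containing \<F> S)) \<le> real (card {G\<in>\<G>. S \<subseteq> G}) + 1" by linarith
  have "card {G\<in>\<G>. R \<subseteq> G} \<le> card (fam_containing \<F> R)"
    unfolding fam_containing_def \<G>_def by (rule card_mono) auto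
  hence "Bc ^ (t - m) * real (card {G\<in>\<G>. R \<subseteq> G}) \<le> Bc ^ (t - m) * real (card (fam_containing \<F> R))"
    using Bc0 by (simp add: mult_left_mono)
  hence "real (card (fam_containing \<F> S)) \<le> Bc ^ (t - m) * real (card (fam_containing \<F> R)) + 1"
    using c1 R(4) by linarith
  thus ?thesis using Rin R(3) gb by auto
qed

end
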